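(* Let $\mu$ be a probability measure on $\{0,1\}^{\mathbb{N}}$ and $X\sim\mu$. Define $\xi(i,j):=\mathbb{P}(X_i\neq X_j)$ and $\rho(i,j):=\frac{2}{\sqrt3}\wedge\sqrt{\frac{2}{\log\frac{2}{\xi(i,j)}}}$ for $i,j\in\mathbb{N}$, with $\rho(i,j)=0$ whenever $\xi(i,j)=0$. Then $\rho:\mathbb{N}^2\to\mathbb{R}_+$ satisfies the metric axioms.
   Context: $a\wedge b=\min\{a,b\}$. *)

theory Defs
  imports "HOL-Probability.Probability"
begin

definition xi :: "(nat \<Rightarrow> bool) measure \<Rightarrow> nat \<Rightarrow> nat \<Rightarrow> real" where
  "xi \<mu> i j = measure \<mu> {x \<in> space \<mu>. x i \<noteq> x j}"

definition rho :: "(nat \<Rightarrow> bool) measure \<Rightarrow> nat \<Rightarrow> nat \<Rightarrow> real" where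
  "rho \<mu> i j = (if xi \<mu> i j = 0 then 0
      else min (2 / sqrt 3) (sqrt (2 / ln (2 / xi \<mu> i j))))"

end

theory Submission
  imports Defs
begin

lemma ln2_half: "1/2 \<le> ln (2::real)"
proof -
  have "exp (1/2::real) * exp (1/2) = exp 1" by (simp flip: exp_add)
  also have "\<dots> \<le> 3" by (rule exp_le)
  finally have e3: "exp (1/2::real) * exp (1/2) \<le> 3" .
  have "exp (1/2::real) < 2"
  proof (rule ccontr)
    assume "\<not> exp (1/2::real) < 2"
    hence "2 \<le> exp (1/2::real)" by simp
    hence "2 * 2 \<le> exp (1/2::real) * exp (1/2)" by (intro mult_mono) auto
    thus False using e3 by simp
  qed
  hence "ln (exp (1/2::real)) < ln 2" by (subst ln_less_cancel_iff) auto
  thus ?thesis by simp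
qed

definition F :: "real \<Rightarrow> real" where
  "F c = (if c = 0 then 0 else min (2 / sqrt 3) (sqrt (2 / ln (2 / c))))"

definition g :: "real \<Rightarrow> real" where
  "g c = sqrt (2 / ln (2 / c))"

lemma L_pos: "0 < c \<Longrightarrow> c \<le> 1 \<Longrightarrow> 0 < ln (2 / (c::real))"
  by (simp add: divide_less_eq)

lemma F_nonneg: "0 \<le> c \<Longrightarrow> c \<le> 1 \<Longrightarrow> 0 \<le> F c"
  using L_pos[of c] by (auto simp: F_def)

lemma g_mono: "0 < x \<Longrightarrow> x \<le> y \<Longrightarrow> y \<le> 1 \<Longrightarrow> g x \<le> g y"
proof -
  assume h: "0 < x" "x \<le> y" "y \<le> 1"
  have "ln (2/y) \<le> ln (2/x)" using h by (simp add: frac_le)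
  moreover have "0 < ln (2/y)" using L_pos[of y] h by simp
  ultimately have "2 / ln (2/x) \<le> 2 / ln (2/y)" by (simp add: frac_le)
  thus ?thesis unfolding g_def by simp
qed

lemma F_mono: "0 \<le> x \<Longrightarrow> x \<le> y \<Longrightarrow> y \<le> 1 \<Longrightarrow> F x \<le> F y"
proof -
  assume h: "0 \<le> x" "x \<le> y" "y \<le> 1"
  show ?thesis
  proof (cases "x = 0")
    case True thus ?thesis using F_nonneg[of y] h by (simp add: F_def)
  next
    case False
    hence "g x \<le> g y" using g_mono[of x y] h by simp
    moreover have "F x = min (2 / sqrt 3) (g x)" using False by (simp add: F_def g_def)
    moreover have "F y = min (2 / sqrt 3) (g y)" using False h by (simp add: F_def g_def)
    ultimately show ?thesis by (auto simp: min_def)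
  qed
qed

lemma phi_mono:
  fixes x y :: real
  assumes h: "0 < x" "x \<le> y" "y \<le> 1"
  shows "x^2 * ln (2/x) \<le> y^2 * ln (2/y)"
proof -
  define t where "t = y / x"
  have t1: "1 \<le> t" using h by (simp add: t_def)
  have yt: "y = x * t" using h by (simp add: t_def)
  have "2/y = (2/x)/t" by (simp add: yt)
  hence Ly: "ln (2/y) = ln (2/x) - ln t"
    using h t1 by (simp add: ln_div ln_mult)
  have Lx: "ln 2 + ln t \<le> ln (2/x)"
  proof -
    have "2 * t \<le> 2 / x" using h yt by (simp add: field_simps)
    hence "ln (2 * t) \<le> ln (2/x)" using t1 h by (subst ln_le_cancel_iff) auto
    thus ?thesis using t1 by (simp add: ln_mult)
  qed
  have lnt: "ln t \<le> t - 1" using ln_le_minus_one t1 by simp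
  have lnt0: "0 \<le> ln t" using t1 by simp
  have "(t - 1) \<le> (t - 1) * ((t + 1) * ln 2)"
  proof -
    have "2 * ln 2 \<le> (t+1) * ln 2" by (rule mult_right_mono) (use t1 in auto)
    hence "1 \<le> (t+1) * ln 2" using ln2_half by linarith
    thus ?thesis using t1 by (simp add: mult_le_cancel_left1)
  qed
  hence A: "ln t \<le> (t^2 - 1) * ln 2" using lnt by (simp add: power2_eq_square algebra_simps)
  have t21: "0 \<le> t^2 - 1" using t1 by (simp add: one_le_power)
  have "t^2 * ln t \<le> (t^2 - 1) * (ln 2 + ln t) " using A by (simp add: algebra_simps)
  also have "\<dots> \<le> (t^2 - 1) * ln (2/x)" using Lx t21 by (simp add: mult_left_mono)
  finally have B: "ln (2/x) \<le> t^2 * (ln (2/x) - ln t)" by (simp add: algebra_simps)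
  have "x^2 * ln (2/x) \<le> x^2 * (t^2 * (ln (2/x) - ln t))"
    using B by (simp add: mult_left_mono)
  also have "\<dots> = y^2 * ln (2/y)" unfolding Ly unfolding yt by (simp add: power_mult_distrib)
  finally show ?thesis .
qed

lemma g_key:
  fixes x y :: real
  assumes h: "0 < x" "x \<le> y" "y \<le> 1"
  shows "x * g y \<le> y * g x"
proof -
  have Lx: "0 < ln (2/x)" using L_pos h by simp
  have Ly: "0 < ln (2/y)" using L_pos h by simp
  have P: "x^2 * ln (2/x) \<le> y^2 * ln (2/y)" by (rule phi_mono[OF h])
  have "x^2 * (2 / ln (2/y)) \<le> y^2 * (2 / ln (2/x))"
    using P Lx Ly by (simp add: field_simps)
  hence "sqrt (x^2 * (2 / ln (2/y))) \<le> sqrt (y^2 * (2 / ln (2/x)))" by simp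
  moreover have "sqrt (x^2 * (2 / ln (2/y))) = x * g y"
    unfolding real_sqrt_mult[of "x^2"] using h by (simp add: g_def)
  moreover have "sqrt (y^2 * (2 / ln (2/x))) = y * g x"
    unfolding real_sqrt_mult[of "y^2"] using h by (simp add: g_def)
  ultimately show ?thesis by metis
qed

lemma F_key:
  fixes x y :: real
  assumes h: "0 < x" "x \<le> y" "y \<le> 1"
  shows "x * F y \<le> y * F x"
proof (cases "F x = 2 / sqrt 3")
  case True
  have "F x \<le> F y" using F_mono h by simp
  moreover have "F y \<le> 2 / sqrt 3" using h by (simp add: F_def)
  ultimately have "F y = F x" using True by simp
  thus ?thesis using h F_nonneg[of x] by (simp add: mult_right_mono)
next
  case False
  hence Fx: "F x = g x" using h unfolding F_def g_def by (auto simp: min_def split: if_splits)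
  have "F y \<le> g y" using h unfolding F_def g_def by auto
  hence "x * F y \<le> x * g y" using h by (simp add: mult_left_mono)
  also have "\<dots> \<le> y * g x" by (rule g_key[OF h])
  finally show ?thesis using Fx by simp
qed

lemma F_tri:
  fixes a b c :: real
  assumes "0 \<le> a" "0 \<le> b" "0 \<le> c" "a \<le> 1" "b \<le> 1" "c \<le> 1" "c \<le> a + b"
  shows "F c \<le> F a + F b"
proof -
  consider "a = 0" | "b = 0" | "0 < a" "0 < b" using assms by linarith
  thus ?thesis
  proof cases
    case 1 thus ?thesis using F_mono[of c b] assms by (simp add: F_def)
  next
    case 2 thus ?thesis using F_mono[of c a] assms by (simp add: F_def)
  next
    case 3
    define s where "s = min (a+b) 1"
    have s0: "0 < s" "s \<le> 1" "s \<le> a + b" "a \<le> s" "b \<le> s" "c \<le> s"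
      using 3 assms by (auto simp: s_def)
    have Fc: "F c \<le> F s" using F_mono assms s0 by simp
    have "a * F s \<le> s * F a" using F_key[of a s] 3 s0 by simp
    moreover have "b * F s \<le> s * F b" using F_key[of b s] 3 s0 by simp
    moreover have "s * F s \<le> (a + b) * F s"
      using s0 F_nonneg[of s] by (simp add: mult_right_mono)
    ultimately have "s * F s \<le> s * (F a + F b)" by (simp add: algebra_simps)
    hence "F s \<le> F a + F b" using s0 by simp
    thus ?thesis using Fc by simp
  qed
qed

theorem lemma18:
  fixes \<mu> :: "(nat \<Rightarrow> bool) measure"
  assumes "prob_space \<mu>"
    and "sets \<mu> = sets (Pi\<^sub>M UNIV (\<lambda>_::nat. count_space (UNIV :: bool set)))"
  shows "(\<forall>i j. 0 \<le> rho \<mu> i j)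
       \<and> (\<forall>i. rho \<mu> i i = 0)
       \<and> (\<forall>i j. rho \<mu> i j = rho \<mu> j i)
       \<and> (\<forall>i j k. rho \<mu> i k \<le> rho \<mu> i j + rho \<mu> j k)"
proof -
  interpret prob_space \<mu> by fact
  have comp: "(\<lambda>x. x i) \<in> measurable \<mu> (count_space UNIV)" for i
    by (subst measurable_cong_sets[OF assms(2) refl]) (rule measurable_component_singleton, simp)
  have meas: "{x \<in> space \<mu>. x i \<noteq> x j} \<in> sets \<mu>" for i j
    using comp[of i] comp[of j] by measurable
  have rF: "rho \<mu> i j = F (xi \<mu> i j)" for i j by (simp add: rho_def F_def)
  have x0: "0 \<le> xi \<mu> i j" for i j by (simp add: xi_def)
  have x1: "xi \<mu> i j \<le> 1" for i j by (simp add: xi_def)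
  have xs: "xi \<mu> i j = xi \<mu> j i" for i j unfolding xi_def by metis
  have xii: "xi \<mu> i i = 0" for i by (simp add: xi_def)
  have xt: "xi \<mu> i k \<le> xi \<mu> i j + xi \<mu> j k" for i j k
  proof -
    have "xi \<mu> i k \<le> measure \<mu> ({x \<in> space \<mu>. x i \<noteq> x j} \<union> {x \<in> space \<mu>. x j \<noteq> x k})"
      unfolding xi_def by (rule finite_measure_mono) (use meas in auto)
    also have "\<dots> \<le> xi \<mu> i j + xi \<mu> j k"
      unfolding xi_def by (rule measure_subadditive) (use meas in auto)
    finally show ?thesis .
  qed
  have T: "rho \<mu> i k \<le> rho \<mu> i j + rho \<mu> j k" for i j k
    unfolding rF by (rule F_tri[OF x0 x0 x0 x1 x1 x1 xt])
  have N: "0 \<le> rho \<mu> i j" for i j unfolding rF using F_nonneg x0 x1 by blast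
  have Z: "rho \<mu> i i = 0" for i unfolding rF using xii by (simp add: F_def)
  have S: "rho \<mu> i j = rho \<mu> j i" for i j unfolding rF using xs by metis
  show ?thesis using N Z S T by blast
qed

end
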